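(* Let $A\subset\mathbb R^{n+1}_+$ be measurable with $M(A)<\infty$, and assume there exist $\delta,\delta'\in(0,1/10)$ such that $|B_\rho(\mathbf z,\delta)\cap A|\ge\delta'|B_\rho(\mathbf z,\delta)|$ for every $\mathbf z\in A$. Then $M(A_R)<\infty$ for every $R\in(0,\infty)$.
   Context: $\mathbb R^{n+1}_+=\mathbb R^n\times(0,\infty)$; $|\cdot|$ is Lebesgue measure. $\mathcal D$: dyadic cubes $2^{-j}(k+[0,1)^n)$, $j\in\mathbb Z_+$, $k\in\mathbb Z^n$, with side length $\ell(I)$. $M(A):=\sup_{I\in\mathcal D}\frac1{|I|}\int_I\int_0^{\ell(I)}\mathbf 1_A(x,y)\frac{dy}ydx$. Hyperbolic metric $\rho(\mathbf x,\mathbf y)=\operatorname{arccosh}(1+\frac{|\mathbf x-\mathbf y|^2}{2x_{n+1}y_{n+1}})$, $B_\rho(\mathbf z,t)=\{\mathbf y:\rho(\mathbf z,\mathbf y)<t\}$, $A_R=\{\mathbf x:\inf_{\mathbf y\in A}\rho(\mathbf x,\mathbf y)<R\}$. *)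

theory Defs
  imports "HOL-Analysis.Analysis"
begin

definition upper_half :: "((real^'n) \<times> real) set" where
  "upper_half = {p. snd p > 0}"

definition dyadic_cube :: "nat \<Rightarrow> ('n::finite \<Rightarrow> int) \<Rightarrow> (real^'n) set" where
  "dyadic_cube j k = {x. \<forall>i. real_of_int (k i) / 2^j \<le> x $ i \<and> x $ i < (real_of_int (k i) + 1) / 2^j}"

text \<open>M(A) = sup over dyadic cubes I of (1/|I|) \<integral>_I \<integral>_0^{l(I)} 1_A(x,y) dy/y dx,
  where l(I) = 2^-j and |I| = 2^(-j n).\<close>
definition Mcar :: "((real^'n::finite) \<times> real) set \<Rightarrow> ennreal" where
  "Mcar A = (SUP jk \<in> (UNIV :: (nat \<times> ('n \<Rightarrow> int)) set).
     ennreal (2 ^ (CARD('n) * fst jk)) *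
     (\<integral>\<^sup>+ p. indicator (A \<inter> (dyadic_cube (fst jk) (snd jk) \<times> {0<..<1 / 2 ^ fst jk})) p
        / ennreal (snd p) \<partial>lebesgue))"

definition hrho :: "((real^'n) \<times> real) \<Rightarrow> ((real^'n) \<times> real) \<Rightarrow> real" where
  "hrho p q = arcosh (1 + (dist p q)\<^sup>2 / (2 * snd p * snd q))"

definition hball :: "((real^'n) \<times> real) \<Rightarrow> real \<Rightarrow> ((real^'n) \<times> real) set" where
  "hball z t = {q \<in> upper_half. hrho z q < t}"

text \<open>A_R = {x in the upper half space : inf_{y in A} rho(x,y) < R}, written as an existential.\<close>
definition hnbhd :: "((real^'n) \<times> real) set \<Rightarrow> real \<Rightarrow> ((real^'n) \<times> real) set" where
  "hnbhd A R = {p \<in> upper_half. \<exists>q\<in>A. hrho p q < R}"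

end

theory Submission
  imports Defs
begin

lemma arcosh_lt_imp: "1 \<le> (x::real) \<Longrightarrow> arcosh x < t \<Longrightarrow> x < cosh t"
proof -
  assume x: "1 \<le> x" and a: "arcosh x < t"
  have t: "0 < t" using arcosh_nonneg_real[OF x] a by linarith
  have "arcosh x < arcosh (cosh t)" using a t by (simp add: arcosh_cosh_real)
  then show "x < cosh t" using x cosh_real_ge_1 arcosh_less_iff_real by blast
qed

lemma lt_cosh_imp: "1 \<le> (x::real) \<Longrightarrow> 0 \<le> t \<Longrightarrow> x < cosh t \<Longrightarrow> arcosh x < t"
  by (metis arcosh_cosh_real arcosh_less_iff_real cosh_real_ge_1)

lemma cosh_gt1: "0 < (t::real) \<Longrightarrow> 1 < cosh t"
  by (metis arcosh_cosh_real arcosh_real_gt_1_iff cosh_real_ge_1 order.not_eq_order_implies_strict less_imp_le)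

lemma hrho_sym: "hrho p q = hrho q p"
  unfolding hrho_def by (simp add: dist_commute mult_ac)

lemma hrho_bound:
  fixes p q :: "(real^'n::finite) \<times> real"
  assumes yp: "0 < snd p" and yq: "0 < snd q" and h: "hrho p q < R"
  shows "snd q < 2 * cosh R * snd p \<and> dist p q < 2 * cosh R * snd p"
proof -
  define a where "a = cosh R - 1"
  define d where "d = dist p q"
  have a0: "0 \<le> a" using cosh_real_ge_1[of R] a_def by simp
  have pos: "0 < 2 * snd p * snd q" using yp yq by simp
  have x1: "1 \<le> 1 + d\<^sup>2 / (2 * snd p * snd q)" using pos by simp
  have "1 + d\<^sup>2 / (2 * snd p * snd q) < cosh R"
    using arcosh_lt_imp[OF x1] h unfolding hrho_def d_def by simp
  then have "d\<^sup>2 / (2 * snd p * snd q) < a" unfolding a_def by simp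
  then have d2: "d\<^sup>2 < 2 * a * snd p * snd q" using pos by (simp add: divide_less_eq mult_ac)
  have "\<bar>snd p - snd q\<bar> \<le> d" using dist_snd_le[of p q] unfolding d_def dist_real_def .
  then have "(snd p - snd q)\<^sup>2 \<le> d\<^sup>2"
    by (metis abs_ge_zero power2_abs power_mono)
  with d2 have "(snd p - snd q)\<^sup>2 < 2 * a * snd p * snd q" by linarith
  then have e: "snd q * snd q + snd p * snd p < (2 + 2*a) * snd p * snd q"
    by (simp add: power2_eq_square algebra_simps)
  have "0 \<le> snd p * snd p" by simp
  with e have "snd q * snd q < (2 + 2*a) * snd p * snd q" by linarith
  then have q1: "snd q < (2 + 2*a) * snd p" using yq by simp
  have "d\<^sup>2 < 2 * a * snd p * ((2 + 2*a) * snd p)"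
    using d2 q1 a0 yp
    by (smt (verit, best) mult_left_mono mult_nonneg_nonneg)
  also have "\<dots> \<le> ((2 + 2*a) * snd p)\<^sup>2" using a0 yp
    by (simp add: power2_eq_square algebra_simps mult_right_mono)
  finally have "d < (2 + 2*a) * snd p"
    using yp a0 by (smt (verit) power2_less_imp_less mult_nonneg_nonneg)
  then show ?thesis using q1 unfolding a_def d_def by simp
qed

lemma ball_sub_hball:
  fixes q :: "(real^'n::finite) \<times> real"
  assumes d: "0 < \<delta>" and yq: "0 < snd q"
  shows "ball q (min (1/2) (cosh \<delta> - 1) * snd q) \<subseteq> hball q \<delta>"
proof
  fix w assume w: "w \<in> ball q (min (1/2) (cosh \<delta> - 1) * snd q)"
  define r where "r = min (1/2) (cosh \<delta> - 1)"
  have r0: "0 < r" using cosh_gt1[OF d] unfolding r_def by simp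
  have r1: "r \<le> 1/2" "r \<le> cosh \<delta> - 1" unfolding r_def by (rule min.cobounded1, rule min.cobounded2)
  have dw: "dist q w < r * snd q" using w unfolding r_def by simp
  have "\<bar>snd q - snd w\<bar> \<le> dist q w" using dist_snd_le[of q w] by (simp add: dist_real_def)
  moreover have "r * snd q \<le> snd q / 2" using r1 yq by simp
  ultimately have yw: "snd q / 2 < snd w" using dw by linarith
  then have yw0: "0 < snd w" using yq by simp
  have pos: "0 < 2 * snd q * snd w" using yq yw0 by simp
  have "(dist q w)\<^sup>2 \<le> (r * snd q)\<^sup>2"
    using dw by (simp add: power_mono less_imp_le)
  also have "\<dots> = r * r * (snd q * snd q)" by (simp add: power2_eq_square)
  also have "\<dots> < (cosh \<delta> - 1) * (2 * snd q * snd w)"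
  proof -
    have "r * r \<le> r * (1/2)" using r0 r1 by (intro mult_left_mono) auto
    then have "r * r \<le> (cosh \<delta> - 1)" using r0 r1 by linarith
    moreover have "snd q * snd q < 2 * (snd q * snd w)"
    proof -
      have "snd q < 2 * snd w" using yw by simp
      then have "snd q * snd q < snd q * (2 * snd w)" by (rule mult_strict_left_mono[OF _ yq])
      then show ?thesis by (simp add: mult_ac)
    qed
    ultimately have "r * r * (snd q * snd q) \<le> (cosh \<delta> - 1) * (snd q * snd q)"
      using yq by (simp add: mult_right_mono)
    also have "\<dots> < (cosh \<delta> - 1) * (2 * (snd q * snd w))"
      using \<open>snd q * snd q < 2 * (snd q * snd w)\<close> cosh_gt1[OF d]
      by (intro mult_strict_left_mono) auto
    finally show ?thesis by (simp add: mult_ac)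
  qed
  finally have "(dist q w)\<^sup>2 / (2 * snd q * snd w) < cosh \<delta> - 1"
    using pos by (simp add: divide_less_eq)
  then have lt: "1 + (dist q w)\<^sup>2 / (2 * snd q * snd w) < cosh \<delta>" by simp
  have "hrho q w < \<delta>" unfolding hrho_def
    by (rule lt_cosh_imp[OF _ _ lt]) (use pos d in auto)
  then show "w \<in> hball q \<delta>" unfolding hball_def upper_half_def using yw0 by simp
qed

lemma fst_borel[measurable]: "(fst :: 'a::euclidean_space \<times> 'b::euclidean_space \<Rightarrow> 'a) \<in> borel_measurable borel"
  by (intro borel_measurable_continuous_onI continuous_intros)
lemma snd_borel[measurable]: "(snd :: 'a::euclidean_space \<times> 'b::euclidean_space \<Rightarrow> 'b) \<in> borel_measurable borel"
  by (intro borel_measurable_continuous_onI continuous_intros)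

lemma arcosh_borel[measurable]: "(arcosh :: real \<Rightarrow> real) \<in> borel_measurable borel"
  unfolding arcosh_def[abs_def] by measurable

lemma hball_borel: "hball z d \<in> sets borel"
proof -
  have "hball z d = {q. 0 < snd q \<and> arcosh (1 + (dist z q)\<^sup>2 / (2 * snd z * snd q)) < d}"
    unfolding hball_def hrho_def upper_half_def by auto
  also have "\<dots> \<in> sets borel" by measurable
  finally show ?thesis .
qed

lemma ball_meas:
  fixes c :: "(real^'n::finite) \<times> real"
  assumes "0 \<le> r"
  shows "emeasure lborel (ball c r) = ennreal (r ^ (CARD('n)+1) * measure lborel (ball (0::(real^'n)\<times>real) 1))"
proof -
  have "emeasure lborel (ball c r) = ennreal (measure lborel (ball c r))"
    using emeasure_lborel_ball_finite[of c r] by (subst emeasure_eq_ennreal_measure) auto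
  also have "measure lborel (ball c r) = r ^ (CARD('n)+1) * measure lborel (ball (0::(real^'n)\<times>real) 1)"
    using content_ball_conv_unit_ball[OF assms, of c] by simp
  finally show ?thesis .
qed

lemma Eset_borel[measurable]: "{w::(real^'n::finite) \<times> real. dist p w < real K * snd p \<and> snd p < real K * snd w} \<in> sets borel"
  by measurable

lemma step1:
  fixes A B :: "((real^'n::finite) \<times> real) set"
  assumes AU: "A \<subseteq> upper_half" and AB: "A \<subseteq> B" and B: "B \<in> sets borel"
    and d: "0 < \<delta>" and d': "0 < \<delta>'"
    and dens: "\<forall>z\<in>A. emeasure lebesgue (hball z \<delta> \<inter> A) \<ge> ennreal \<delta>' * emeasure lebesgue (hball z \<delta>)"
  shows "\<exists>K::nat. \<exists>c>0. \<forall>p\<in>hnbhd A R. ennreal (c * snd p ^ (CARD('n)+1))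
            \<le> emeasure lborel ({w. dist p w < real K * snd p \<and> snd p < real K * snd w} \<inter> B)"
proof -
  define K1 where "K1 = 2 * cosh R"
  define K2 where "K2 = 2 * cosh \<delta>"
  define r where "r = min (1/2) (cosh \<delta> - 1)"
  define \<omega> where "\<omega> = measure lborel (ball (0::(real^'n)\<times>real) 1)"
  define N where "N = CARD('n) + 1"
  have K1: "2 \<le> K1" unfolding K1_def using cosh_real_ge_1[of R] by simp
  have K2: "2 \<le> K2" unfolding K2_def using cosh_real_ge_1[of \<delta>] by simp
  have r0: "0 < r" using cosh_gt1[OF d] unfolding r_def by simp
  have \<omega>0: "0 < \<omega>" unfolding \<omega>_def by (rule content_ball_pos) simp
  obtain K :: nat where K: "K1 * (1 + K2) \<le> real K" using real_arch_simple by blast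
  define c where "c = \<delta>' * (r / K1) ^ N * \<omega>"
  have c0: "0 < c" unfolding c_def using d' r0 K1 \<omega>0 by simp
  have "\<forall>p\<in>hnbhd A R. ennreal (c * snd p ^ N)
            \<le> emeasure lborel ({w. dist p w < real K * snd p \<and> snd p < real K * snd w} \<inter> B)"
  proof
    fix p assume "p \<in> hnbhd A R"
    then obtain q where pU: "p \<in> upper_half" and qA: "q \<in> A" and pq: "hrho p q < R"
      unfolding hnbhd_def by auto
    have yp: "0 < snd p" using pU unfolding upper_half_def by simp
    have yq: "0 < snd q" using qA AU unfolding upper_half_def by auto
    have dpq: "dist p q < K1 * snd p" using hrho_bound[OF yp yq pq] unfolding K1_def by simp
    have ypq: "snd p < K1 * snd q" using hrho_bound[OF yq yp, of R] pq hrho_sym[of p q]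
      unfolding K1_def by simp
    define E where "E = {w. dist p w < real K * snd p \<and> snd p < real K * snd w}"
    have sub: "hball q \<delta> \<subseteq> E"
    proof
      fix w assume "w \<in> hball q \<delta>"
      then have yw: "0 < snd w" and qw: "hrho q w < \<delta>" unfolding hball_def upper_half_def by auto
      have dqw: "dist q w < K2 * snd q" using hrho_bound[OF yq yw qw] unfolding K2_def by simp
      have yqw: "snd q < K2 * snd w" using hrho_bound[OF yw yq, of \<delta>] qw hrho_sym[of q w]
        unfolding K2_def by simp
      have "K2 * snd q < K2 * (K1 * snd p)"
        using ypq dpq hrho_bound[OF yp yq pq] K2 unfolding K1_def by simp
      then have "dist p w < K1 * (1 + K2) * snd p"
        using dist_triangle[of p w q] dpq dqw by (simp add: algebra_simps)
      also have "\<dots> \<le> K * snd p" using K yp by (simp add: mult_right_mono)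
      finally have 1: "dist p w < real K * snd p" .
      have "K1 * snd q < K1 * (K2 * snd w)" using yqw K1 by simp
      then have "snd p < K1 * K2 * snd w" using ypq by (simp add: mult.assoc)
      also have "\<dots> \<le> K1 * (1 + K2) * snd w" using yw K1 by (simp add: algebra_simps)
      also have "\<dots> \<le> K * snd w" using K yw by (simp add: mult_right_mono)
      finally show "w \<in> E" unfolding E_def using 1 by simp
    qed
    have EB: "E \<inter> B \<in> sets borel" unfolding E_def using B by measurable
    have "snd p / K1 < snd q" using ypq K1 by (simp add: divide_less_eq mult.commute)
    then have "r * (snd p / K1) \<le> r * snd q" using r0 by (intro mult_left_mono) auto
    then have "(r * (snd p / K1)) ^ N \<le> (r * snd q) ^ N"
      using r0 yp K1 by (intro power_mono) auto
    then have "\<delta>' * ((r * (snd p / K1)) ^ N * \<omega>) \<le> \<delta>' * ((r * snd q) ^ N * \<omega>)"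
      using d' \<omega>0 by (intro mult_left_mono mult_right_mono) auto
    moreover have "c * snd p ^ N = \<delta>' * ((r * (snd p / K1)) ^ N * \<omega>)"
      unfolding c_def by (simp add: power_mult_distrib power_divide)
    ultimately have "c * snd p ^ N \<le> \<delta>' * ((r * snd q) ^ N * \<omega>)" by simp
    then have "ennreal (c * snd p ^ N) \<le> ennreal (\<delta>' * ((r * snd q) ^ N * \<omega>))"
      by (rule ennreal_leI)
    also have "\<dots> = ennreal \<delta>' * ennreal ((r * snd q) ^ N * \<omega>)"
      by (rule ennreal_mult) (use d' r0 yq \<omega>0 in auto)
    also have "ennreal ((r * snd q) ^ N * \<omega>) = emeasure lebesgue (ball q (r * snd q))"
      using ball_meas[of "r * snd q" q] r0 yq unfolding N_def \<omega>_def by simp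
    also have "\<dots> \<le> emeasure lebesgue (hball q \<delta>)"
      using ball_sub_hball[OF d yq] hball_borel[of q \<delta>] unfolding r_def
      by (intro emeasure_mono) auto
    also have "ennreal \<delta>' * \<dots> \<le> emeasure lebesgue (hball q \<delta> \<inter> A)"
      using dens qA by auto
    also have "\<dots> \<le> emeasure lebesgue (E \<inter> B)"
      using sub AB EB by (intro emeasure_mono) auto
    also have "\<dots> = emeasure lborel (E \<inter> B)"
      using EB by simp
    finally show "ennreal (c * snd p ^ N) \<le> emeasure lborel ({w. dist p w < real K * snd p \<and> snd p < real K * snd w} \<inter> B)"
      unfolding E_def by (simp add: mult_left_mono)
  qed
  then show ?thesis using c0 unfolding N_def by blast
qed

definition Tset :: "nat \<Rightarrow> ('n::finite \<Rightarrow> int) \<Rightarrow> ((real^'n) \<times> real) set" where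
  "Tset j k = dyadic_cube j k \<times> {0<..<1/2^j}"

definition Sset :: "nat \<Rightarrow> ('n::finite \<Rightarrow> int) \<Rightarrow> nat \<Rightarrow> ((real^'n) \<times> real) set" where
  "Sset j k K = {w. 0 < snd w \<and> snd w < (1 + real K) / 2^j \<and>
     (\<forall>i. (real_of_int (k i) - real K) / 2^j < fst w $ i \<and> fst w $ i < (real_of_int (k i) + real K + 1) / 2^j)}"

lemma dyadic_borel[measurable]: "dyadic_cube j k \<in> sets borel"
  unfolding dyadic_cube_def by measurable

lemma Tset_borel[measurable]: "Tset j k \<in> sets borel"
proof -
  have "Tset j k = {p. fst p \<in> dyadic_cube j k \<and> 0 < snd p \<and> snd p < 1/2^j}"
    unfolding Tset_def by auto
  also have "\<dots> \<in> sets borel" by measurable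
  finally show ?thesis .
qed

lemma Sset_borel[measurable]: "Sset j k K \<in> sets borel"
  unfolding Sset_def by measurable

lemma G_meas:
  fixes B :: "((real^'n::finite) \<times> real) set"
  assumes B: "B \<in> sets borel"
  shows "(\<lambda>x::((real^'n) \<times> real) \<times> ((real^'n) \<times> real). indicator (Tset j k) (fst x) * ennreal (1 / (c * snd (fst x) ^ m)) * indicator {x. dist (fst x) (snd x) < K * snd (fst x) \<and> snd (fst x) < K * snd (snd x)} x * indicator B (snd x)) \<in> borel_measurable (lborel \<Otimes>\<^sub>M lborel)"
proof -
  have h1: "(\<lambda>x::((real^'n) \<times> real) \<times> ((real^'n) \<times> real). indicator (Tset j k) (fst x) :: ennreal) \<in> borel_measurable borel"
    by (rule measurable_compose[OF fst_borel]) simp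
  have h4: "(\<lambda>x::((real^'n) \<times> real) \<times> ((real^'n) \<times> real). indicator B (snd x) :: ennreal) \<in> borel_measurable borel"
    by (rule measurable_compose[OF snd_borel]) (rule borel_measurable_indicator[OF B])
  have sf: "(\<lambda>x::((real^'n) \<times> real) \<times> ((real^'n) \<times> real). snd (fst x)) \<in> borel_measurable borel"
    by (intro borel_measurable_continuous_onI continuous_intros)
  have h2: "(\<lambda>x::((real^'n) \<times> real) \<times> ((real^'n) \<times> real). ennreal (1 / (c * snd (fst x) ^ m))) \<in> borel_measurable borel"
    by (rule measurable_compose[OF sf]) measurable
  have "open {x::((real^'n) \<times> real) \<times> ((real^'n) \<times> real). dist (fst x) (snd x) < K * snd (fst x) \<and> snd (fst x) < K * snd (snd x)}"
  proof -
    have "open {x::((real^'n) \<times> real) \<times> ((real^'n) \<times> real). dist (fst x) (snd x) < K * snd (fst x)}"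
      by (intro open_Collect_less continuous_intros)
    moreover have "open {x::((real^'n) \<times> real) \<times> ((real^'n) \<times> real). snd (fst x) < K * snd (snd x)}"
      by (intro open_Collect_less continuous_intros)
    ultimately show ?thesis by (simp add: Collect_conj_eq open_Int)
  qed
  then have h3: "(\<lambda>x::((real^'n) \<times> real) \<times> ((real^'n) \<times> real). indicator {x. dist (fst x) (snd x) < K * snd (fst x) \<and> snd (fst x) < K * snd (snd x)} x :: ennreal) \<in> borel_measurable borel"
    by (intro borel_measurable_indicator borel_open)
  show ?thesis unfolding lborel_prod measurable_lborel2
    using h1 h2 h3 h4 by (intro borel_measurable_times_ennreal)
qed

lemma inner_bound:
  fixes B :: "((real^'n::finite) \<times> real) set" and w :: "(real^'n) \<times> real" and K :: nat and c :: real
  assumes B: "B \<in> sets borel" and c0: "0 < c"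
  defines "N \<equiv> CARD('n) + 1"
  defines "C2 \<equiv> (1 + real K) ^ (N+1) * (real K ^ 2) ^ N * measure lborel (ball (0::(real^'n)\<times>real) 1) / c"
  shows "(\<integral>\<^sup>+p. indicator (Tset j k) p * ennreal (1 / (c * snd p ^ (N+1))) *
            indicator {x. dist (fst x) (snd x) < real K * snd (fst x) \<and> snd (fst x) < real K * snd (snd x)} (p, w)
            * indicator B w \<partial>lborel)
         \<le> ennreal C2 * (indicator (B \<inter> Sset j k K) w * ennreal (1 / snd w))"
proof -
  define G where "G p = indicator (Tset j k) p * ennreal (1 / (c * snd p ^ (N+1))) *
            indicator {x. dist (fst x) (snd x) < real K * snd (fst x) \<and> snd (fst x) < real K * snd (snd x)} (p, w)
            * (indicator B w :: ennreal)" for p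
  have nz: "p \<in> Tset j k \<and> dist p w < real K * snd p \<and> snd p < real K * snd w \<and> w \<in> B" if "G p \<noteq> 0" for p
    using that unfolding G_def by (auto simp: indicator_def split: if_splits)
  have inS: "w \<in> Sset j k K" if "G p \<noteq> 0" for p
  proof -
    from nz[OF that] have pT: "p \<in> Tset j k" and d1: "dist p w < real K * snd p"
      and d2: "snd p < real K * snd w" by auto
    have yp: "0 < snd p" and yp1: "snd p < 1/2^j"
      and xp: "\<And>i. real_of_int (k i) / 2^j \<le> fst p $ i \<and> fst p $ i < (real_of_int (k i) + 1) / 2^j"
      using pT unfolding Tset_def dyadic_cube_def by (auto simp: mem_Times_iff)
    have "0 < real K * snd w" using yp d2 by linarith
    then have yw: "0 < snd w" by (simp add: zero_less_mult_iff)
    have "\<bar>snd w - snd p\<bar> \<le> dist p w" using dist_snd_le[of w p] by (simp add: dist_real_def dist_commute)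
    then have "snd w < (1 + real K) * snd p" using d1 by (simp add: algebra_simps)
    also have "\<dots> \<le> (1 + real K) / 2^j" using yp1 by (simp add: divide_simps mult_left_mono less_imp_le)
    finally have yw1: "snd w < (1 + real K) / 2^j" .
    have dK: "dist p w < real K / 2^j"
    proof -
      have "real K * snd p \<le> real K * (1/2^j)" using yp1 by (intro mult_left_mono) auto
      then show ?thesis using d1 by simp
    qed
    have xw: "(real_of_int (k i) - real K) / 2^j < fst w $ i \<and> fst w $ i < (real_of_int (k i) + real K + 1) / 2^j" for i
    proof -
      have "\<bar>fst w $ i - fst p $ i\<bar> \<le> norm (fst w - fst p)"
        using component_le_norm_cart[of "fst w - fst p" i] by simp
      also have "\<dots> = dist (fst w) (fst p)" by (simp add: dist_norm)
      also have "\<dots> \<le> dist w p" by (rule dist_fst_le)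
      finally have "\<bar>fst w $ i - fst p $ i\<bar> < real K / 2^j" using dK by (simp add: dist_commute)
      then show ?thesis using xp[of i] by (simp add: diff_divide_distrib add_divide_distrib abs_less_iff)
    qed
    show ?thesis unfolding Sset_def using yw yw1 xw by simp
  qed
  show ?thesis
  proof (cases "w \<in> B \<inter> Sset j k K")
    case False
    then have "G p = 0" for p using inS nz by blast
    then show ?thesis unfolding G_def[symmetric] by simp
  next
    case True
    then have yw: "0 < snd w" unfolding Sset_def by simp
    define D where "D = (1 + real K) ^ (N+1) / (c * snd w ^ (N+1))"
    have D0: "0 \<le> D" unfolding D_def using c0 yw by simp
    have "G p \<le> ennreal D * indicator (ball w (real K ^ 2 * snd w)) p" for p
    proof (cases "G p = 0")
      case False
      from nz[OF this] have pT: "p \<in> Tset j k" and d1: "dist p w < real K * snd p"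
        and d2: "snd p < real K * snd w" and wB: "w \<in> B" by auto
      have yp: "0 < snd p" using pT unfolding Tset_def by (auto simp: mem_Times_iff)
      have "real K * snd p \<le> real K * (real K * snd w)" using d2 by (intro mult_left_mono) auto
      then have pb: "p \<in> ball w (real K ^ 2 * snd w)" using d1 by (simp add: dist_commute power2_eq_square mult.assoc)
      have "\<bar>snd w - snd p\<bar> \<le> dist p w" using dist_snd_le[of w p] by (simp add: dist_real_def dist_commute)
      then have "snd w \<le> (1 + real K) * snd p" using d1 by (simp add: algebra_simps)
      then have pw: "snd w ^ (N+1) \<le> ((1 + real K) * snd p) ^ (N+1)" using yw by (intro power_mono) auto
      have le: "1 / (c * snd p ^ (N+1)) \<le> D"
        unfolding D_def using pw c0 yp yw
        by (simp add: divide_simps power_mult_distrib mult_left_mono mult.commute mult.left_commute)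
      have "G p \<le> ennreal (1 / (c * snd p ^ (N+1)))"
        unfolding G_def by (simp add: indicator_def)
      also have "\<dots> \<le> ennreal D" using le by (rule ennreal_leI)
      finally show ?thesis using pb by simp
    qed simp
    then have "(\<integral>\<^sup>+p. G p \<partial>lborel) \<le> (\<integral>\<^sup>+p. ennreal D * indicator (ball w (real K ^ 2 * snd w)) p \<partial>lborel)"
      by (intro nn_integral_mono) auto
    also have "\<dots> = ennreal D * emeasure lborel (ball w (real K ^ 2 * snd w))"
      by (rule nn_integral_cmult_indicator) simp
    also have "\<dots> = ennreal D * ennreal ((real K ^ 2 * snd w) ^ N * measure lborel (ball (0::(real^'n)\<times>real) 1))"
      using ball_meas[of "real K ^ 2 * snd w" w] yw unfolding N_def by simp
    also have "\<dots> = ennreal (D * ((real K ^ 2 * snd w) ^ N * measure lborel (ball (0::(real^'n)\<times>real) 1)))"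
      by (rule ennreal_mult[symmetric]) (use D0 yw in auto)
    also have "D * ((real K ^ 2 * snd w) ^ N * measure lborel (ball (0::(real^'n)\<times>real) 1)) = C2 * (1 / snd w)"
      unfolding D_def C2_def using yw c0 by (simp add: power_mult_distrib field_simps)
    also have "ennreal (C2 * (1 / snd w)) = ennreal C2 * (indicator (B \<inter> Sset j k K) w * ennreal (1 / snd w))"
    proof -
      have "0 \<le> C2" unfolding C2_def using c0 by simp
      then have "ennreal C2 * ennreal (1 / snd w) = ennreal (C2 * (1 / snd w))"
        using yw by (intro ennreal_mult[symmetric]) auto
      then show ?thesis using True by simp
    qed
    finally show ?thesis unfolding G_def .
  qed
qed

lemma snd_lebesgue[measurable]: "(snd :: 'a::euclidean_space \<times> 'b::euclidean_space \<Rightarrow> 'b) \<in> borel_measurable lebesgue"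
  by (rule measurable_completion) simp

lemma step2:
  fixes X B :: "((real^'n::finite) \<times> real) set" and K :: nat and c :: real
  assumes B: "B \<in> sets borel" and c0: "0 < c"
    and low: "\<forall>p\<in>X. ennreal (c * snd p ^ (CARD('n)+1)) \<le> emeasure lborel ({w. dist p w < real K * snd p \<and> snd p < real K * snd w} \<inter> B)"
  defines "N \<equiv> CARD('n) + 1"
  defines "C2 \<equiv> (1 + real K) ^ (N+1) * (real K ^ 2) ^ N * measure lborel (ball (0::(real^'n)\<times>real) 1) / c"
  shows "(\<integral>\<^sup>+p. indicator (X \<inter> Tset j k) p / ennreal (snd p) \<partial>lebesgue)
          \<le> ennreal C2 * (\<integral>\<^sup>+w. indicator (B \<inter> Sset j k K) w * ennreal (1 / snd w) \<partial>lborel)"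
proof -
  define Eset where "Eset = {x::((real^'n) \<times> real) \<times> ((real^'n) \<times> real). dist (fst x) (snd x) < real K * snd (fst x) \<and> snd (fst x) < real K * snd (snd x)}"
  define G where "G p w = indicator (Tset j k) p * ennreal (1 / (c * snd p ^ (N+1))) * indicator Eset (p, w) * (indicator B w :: ennreal)" for p w
  have "case_prod G = (\<lambda>x::((real^'n) \<times> real) \<times> ((real^'n) \<times> real). indicator (Tset j k) (fst x) * ennreal (1 / (c * snd (fst x) ^ (N+1))) * indicator {x. dist (fst x) (snd x) < real K * snd (fst x) \<and> snd (fst x) < real K * snd (snd x)} x * indicator B (snd x))"
    by (auto simp: G_def Eset_def fun_eq_iff)
  then have Gm: "case_prod G \<in> borel_measurable (lborel \<Otimes>\<^sub>M lborel)"
    using G_meas[OF B, of j k c "N+1" "real K"] by simp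
  have pt: "indicator (X \<inter> Tset j k) p / ennreal (snd p) \<le> (\<integral>\<^sup>+w. G p w \<partial>lborel)" for p
  proof (cases "p \<in> X \<inter> Tset j k")
    case False
    then show ?thesis by simp
  next
    case True
    then have yp: "0 < snd p" unfolding Tset_def by (auto simp: mem_Times_iff)
    define E where "E = {w. dist p w < real K * snd p \<and> snd p < real K * snd w}"
    have EB: "E \<inter> B \<in> sets lborel" unfolding E_def using B by simp
    have "G p w = ennreal (1 / (c * snd p ^ (N+1))) * indicator (E \<inter> B) w" for w
      using True unfolding G_def E_def Eset_def by (simp add: indicator_def)
    then have "(\<integral>\<^sup>+w. G p w \<partial>lborel) = ennreal (1 / (c * snd p ^ (N+1))) * emeasure lborel (E \<inter> B)"
      using nn_integral_cmult_indicator[OF EB] by simp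
    also have "\<dots> \<ge> ennreal (1 / (c * snd p ^ (N+1))) * ennreal (c * snd p ^ N)"
      using low True unfolding E_def N_def by (intro mult_left_mono) auto
    finally have 1: "ennreal (1 / (c * snd p ^ (N+1))) * ennreal (c * snd p ^ N) \<le> (\<integral>\<^sup>+w. G p w \<partial>lborel)" .
    have "ennreal (1 / (c * snd p ^ (N+1))) * ennreal (c * snd p ^ N) = ennreal (1 / (c * snd p ^ (N+1)) * (c * snd p ^ N))"
      using c0 yp by (intro ennreal_mult[symmetric]) auto
    also have "1 / (c * snd p ^ (N+1)) * (c * snd p ^ N) = 1 / snd p"
      using c0 yp by (simp add: field_simps)
    also have "ennreal (1 / snd p) = indicator (X \<inter> Tset j k) p / ennreal (snd p)"
      using True yp by (simp add: divide_ennreal[symmetric] ennreal_1[symmetric] del: ennreal_1)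
    finally show ?thesis using 1 by simp
  qed
  have "(\<integral>\<^sup>+p. indicator (X \<inter> Tset j k) p / ennreal (snd p) \<partial>lebesgue) \<le> (\<integral>\<^sup>+p. (\<integral>\<^sup>+w. G p w \<partial>lborel) \<partial>lebesgue)"
    by (intro nn_integral_mono pt)
  also have "\<dots> = (\<integral>\<^sup>+p. (\<integral>\<^sup>+w. G p w \<partial>lborel) \<partial>lborel)"
    by (rule nn_integral_completion)
  also have "\<dots> = (\<integral>\<^sup>+w. (\<integral>\<^sup>+p. G p w \<partial>lborel) \<partial>lborel)"
    by (rule lborel_pair.Fubini'[OF Gm, symmetric])
  also have "\<dots> \<le> (\<integral>\<^sup>+w. ennreal C2 * (indicator (B \<inter> Sset j k K) w * ennreal (1 / snd w)) \<partial>lborel)"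
    by (intro nn_integral_mono) (unfold G_def Eset_def C2_def N_def, rule inner_bound[OF B c0])
  also have "\<dots> = ennreal C2 * (\<integral>\<^sup>+w. indicator (B \<inter> Sset j k K) w * ennreal (1 / snd w) \<partial>lborel)"
    using B by (intro nn_integral_cmult) simp
  finally show ?thesis .
qed

lemma Tset_lebesgue[measurable]: "Tset j k \<in> sets lebesgue"
  using Tset_borel[of j k] by simp

lemma step3:
  fixes A S0 N0 N' :: "((real^'n::finite) \<times> real) set" and K :: nat and M :: ennreal
  assumes A: "A \<in> sets lebesgue" and AS: "A = S0 \<union> N0" "N0 \<subseteq> N'" and N': "N' \<in> null_sets lborel"
    and Mb: "\<forall>k'. ennreal (2^(CARD('n)*j)) * (\<integral>\<^sup>+p. indicator (A \<inter> Tset j k') p / ennreal (snd p) \<partial>lebesgue) \<le> M"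
  shows "ennreal (2^(CARD('n)*j)) * (\<integral>\<^sup>+w. indicator ((S0 \<union> N') \<inter> Sset j k K) w * ennreal (1 / snd w) \<partial>lborel)
     \<le> of_nat ((2*K+1)^CARD('n)) * M + ennreal (real ((CARD('n)+1)*(K+1)) ^ (CARD('n)+1) * measure lborel (ball (0::(real^'n)\<times>real) 1))"
proof -
  define n where "n = CARD('n)"
  define S where "S = Sset j k K"
  define \<omega> where "\<omega> = measure lborel (ball (0::(real^'n)\<times>real) 1)"
  define Kset where "Kset = {k'::'n \<Rightarrow> int. \<forall>i. k i - int K \<le> k' i \<and> k' i \<le> k i + int K}"
  define ctr where "ctr = ((\<chi> i. real_of_int (k i) / 2^j) :: real^'n, 0::real)"
  define rad where "rad = real ((n+1)*(K+1)) / 2^j"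
  have \<omega>0: "0 \<le> \<omega>" unfolding \<omega>_def by simp
  have Kset_eq: "Kset = Pi\<^sub>E UNIV (\<lambda>i. {k i - int K .. k i + int K})"
    unfolding Kset_def PiE_UNIV_domain by (auto simp: Pi_def)
  have finK: "finite Kset" unfolding Kset_eq by (intro finite_PiE) auto
  have cardK: "card Kset = (2*K+1)^n"
    unfolding Kset_eq n_def by (subst card_PiE) (auto simp: nat_add_distrib nat_mult_distrib)
  have Sm: "S \<in> sets lebesgue" unfolding S_def using Sset_borel[of j k K] by simp
  have "(\<integral>\<^sup>+w. indicator ((S0 \<union> N') \<inter> S) w * ennreal (1 / snd w) \<partial>lborel)
        = (\<integral>\<^sup>+w. indicator ((S0 \<union> N') \<inter> S) w * ennreal (1 / snd w) \<partial>lebesgue)"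
    by (rule nn_integral_completion[symmetric])
  also have "\<dots> = (\<integral>\<^sup>+w. indicator (A \<inter> S) w * ennreal (1 / snd w) \<partial>lebesgue)"
  proof (rule nn_integral_cong_AE)
    have "AE w in lebesgue. w \<notin> N'" by (rule AE_not_in[OF null_sets_completionI[OF N']])
    then show "AE w in lebesgue. indicator ((S0 \<union> N') \<inter> S) w * ennreal (1 / snd w) = indicator (A \<inter> S) w * ennreal (1 / snd w)"
      by eventually_elim (use AS in \<open>auto simp: indicator_def\<close>)
  qed
  finally have a: "(\<integral>\<^sup>+w. indicator ((S0 \<union> N') \<inter> S) w * ennreal (1 / snd w) \<partial>lborel)
        = (\<integral>\<^sup>+w. indicator (A \<inter> S) w * ennreal (1 / snd w) \<partial>lebesgue)" .
  have pt: "indicator (A \<inter> S) w * ennreal (1 / snd w)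
      \<le> (\<Sum>k'\<in>Kset. indicator (A \<inter> Tset j k') w / ennreal (snd w)) + ennreal (2^j) * indicator (ball ctr rad) w" for w
  proof (cases "w \<in> A \<inter> S")
    case False
    then show ?thesis by simp
  next
    case True
    then have wA: "w \<in> A" and yw: "0 < snd w" and yw1: "snd w < (1 + real K) / 2^j"
      and xw: "\<And>i. (real_of_int (k i) - real K) / 2^j < fst w $ i \<and> fst w $ i < (real_of_int (k i) + real K + 1) / 2^j"
      unfolding S_def Sset_def by auto
    have lhs: "indicator (A \<inter> S) w * ennreal (1 / snd w) = ennreal (1 / snd w)" using True by simp
    show ?thesis
    proof (cases "snd w < 1 / 2^j")
      case True
      define k' where "k' = (\<lambda>i. \<lfloor>fst w $ i * 2^j\<rfloor>)"
      have k'K: "k' \<in> Kset"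
      proof -
        have "k i - int K \<le> k' i \<and> k' i \<le> k i + int K" for i
        proof -
          have "real_of_int (k i) - real K < fst w $ i * 2^j" "fst w $ i * 2^j < real_of_int (k i) + real K + 1"
            using xw[of i] by (simp_all add: divide_less_eq less_divide_eq)
          then show ?thesis unfolding k'_def by (simp add: le_floor_iff floor_le_iff)
        qed
        then show ?thesis unfolding Kset_def by simp
      qed
      have wT: "w \<in> Tset j k'"
      proof -
        have "real_of_int (k' i) / 2^j \<le> fst w $ i \<and> fst w $ i < (real_of_int (k' i) + 1) / 2^j" for i
          unfolding k'_def
          using of_int_floor_le[of "fst w $ i * 2^j"] real_of_int_floor_add_one_gt[of "fst w $ i * 2^j"]
          by (simp add: divide_le_eq less_divide_eq)
        then show ?thesis unfolding Tset_def dyadic_cube_def using yw True by (auto simp: mem_Times_iff)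
      qed
      have "ennreal (1 / snd w) = indicator (A \<inter> Tset j k') w / ennreal (snd w)"
        using wA wT yw by (simp add: divide_ennreal[symmetric] ennreal_1[symmetric] del: ennreal_1)
      also have "\<dots> \<le> (\<Sum>k'\<in>Kset. indicator (A \<inter> Tset j k') w / ennreal (snd w))"
        by (rule member_le_sum[OF k'K]) (auto simp: finK)
      also have "\<dots> \<le> (\<Sum>k'\<in>Kset. indicator (A \<inter> Tset j k') w / ennreal (snd w)) + ennreal (2^j) * indicator (ball ctr rad) w"
        by simp
      finally show ?thesis using lhs by simp
    next
      case False
      then have "1 / snd w \<le> 2^j" using yw by (simp add: field_simps)
      then have 1: "ennreal (1 / snd w) \<le> ennreal (2^j)" by (rule ennreal_leI)
      have "w \<in> ball ctr rad"
      proof -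
        have xi: "\<bar>fst w $ i - real_of_int (k i) / 2^j\<bar> < (real K + 1) / 2^j" for i
        proof -
          have p: "0 < 1/(2::real)^j" by simp
          have "real_of_int (k i) / 2^j - real K / 2^j < fst w $ i" "fst w $ i < real_of_int (k i) / 2^j + real K / 2^j + 1 / 2^j"
            using xw[of i] by (simp_all add: diff_divide_distrib add_divide_distrib)
          moreover have "(real K + 1)/2^j = real K / 2^j + 1/2^j" by (simp add: add_divide_distrib)
          ultimately show ?thesis using p unfolding abs_less_iff by linarith
        qed
        have "norm (fst w - fst ctr) \<le> (\<Sum>i\<in>UNIV. \<bar>(fst w - fst ctr) $ i\<bar>)" by (rule norm_le_l1_cart)
        also have "\<dots> < (\<Sum>i\<in>(UNIV::'n set). (real K + 1) / 2^j)"
          using xi by (intro sum_strict_mono) (auto simp: ctr_def)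
        also have "\<dots> = real n * (real K + 1) / 2^j" by (simp add: n_def)
        finally have h: "norm (fst w - fst ctr) < real n * (real K + 1) / 2^j" .
        have "dist w ctr = norm (fst w - fst ctr, snd w - snd ctr)" by (cases w; cases ctr) (simp add: dist_norm)
        also have "\<dots> \<le> norm (fst w - fst ctr) + norm (snd w - snd ctr)" by (rule norm_Pair_le)
        also have "norm (snd w - snd ctr) = snd w" using yw by (simp add: ctr_def)
        finally have "dist w ctr < real n * (real K + 1) / 2^j + (1 + real K) / 2^j" using h yw1 by linarith
        also have "\<dots> = rad" unfolding rad_def by (simp add: field_simps)
        finally show ?thesis by (simp add: dist_commute)
      qed
      then show ?thesis using 1 lhs by (simp add: add_increasing)
    qed
  qed
  have m1: "(\<lambda>w. indicator (A \<inter> Tset j k') w / ennreal (snd w)) \<in> borel_measurable lebesgue" for k'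
    using A by measurable
  have "(\<integral>\<^sup>+w. indicator (A \<inter> S) w * ennreal (1 / snd w) \<partial>lebesgue)
     \<le> (\<integral>\<^sup>+w. (\<Sum>k'\<in>Kset. indicator (A \<inter> Tset j k') w / ennreal (snd w)) + ennreal (2^j) * indicator (ball ctr rad) w \<partial>lebesgue)"
    by (intro nn_integral_mono pt)
  also have "\<dots> = (\<integral>\<^sup>+w. (\<Sum>k'\<in>Kset. indicator (A \<inter> Tset j k') w / ennreal (snd w)) \<partial>lebesgue)
       + (\<integral>\<^sup>+w. ennreal (2^j) * indicator (ball ctr rad) w \<partial>lebesgue)"
  proof (rule nn_integral_add)
    show "(\<lambda>w. \<Sum>k'\<in>Kset. indicator (A \<inter> Tset j k') w / ennreal (snd w)) \<in> borel_measurable lebesgue"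
      using m1 by (intro borel_measurable_sum) auto
    have "ball ctr rad \<in> sets lebesgue" using borel_open[OF open_ball, of ctr rad] by simp
    then show "(\<lambda>w. ennreal (2^j) * indicator (ball ctr rad) w) \<in> borel_measurable lebesgue"
      by (intro borel_measurable_times_ennreal borel_measurable_const borel_measurable_indicator)
  qed
  also have "(\<integral>\<^sup>+w. (\<Sum>k'\<in>Kset. indicator (A \<inter> Tset j k') w / ennreal (snd w)) \<partial>lebesgue)
      = (\<Sum>k'\<in>Kset. (\<integral>\<^sup>+w. indicator (A \<inter> Tset j k') w / ennreal (snd w) \<partial>lebesgue))"
    using m1 by (intro nn_integral_sum) auto
  also have "(\<integral>\<^sup>+w. ennreal (2^j) * indicator (ball ctr rad) w \<partial>lebesgue) = ennreal (2^j) * emeasure lebesgue (ball ctr rad)"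
    by (rule nn_integral_cmult_indicator) simp
  also have "emeasure lebesgue (ball ctr rad) = ennreal (rad ^ (n+1) * \<omega>)"
    using ball_meas[of rad ctr] unfolding rad_def n_def \<omega>_def by simp
  finally have c: "(\<integral>\<^sup>+w. indicator (A \<inter> S) w * ennreal (1 / snd w) \<partial>lebesgue)
     \<le> (\<Sum>k'\<in>Kset. (\<integral>\<^sup>+w. indicator (A \<inter> Tset j k') w / ennreal (snd w) \<partial>lebesgue)) + ennreal (2^j) * ennreal (rad ^ (n+1) * \<omega>)" .
  have "ennreal (2^(n*j)) * (\<integral>\<^sup>+w. indicator ((S0 \<union> N') \<inter> S) w * ennreal (1 / snd w) \<partial>lborel)
     \<le> ennreal (2^(n*j)) * ((\<Sum>k'\<in>Kset. (\<integral>\<^sup>+w. indicator (A \<inter> Tset j k') w / ennreal (snd w) \<partial>lebesgue)) + ennreal (2^j) * ennreal (rad ^ (n+1) * \<omega>))"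
    unfolding a by (intro mult_left_mono c) simp
  also have "\<dots> = (\<Sum>k'\<in>Kset. ennreal (2^(n*j)) * (\<integral>\<^sup>+w. indicator (A \<inter> Tset j k') w / ennreal (snd w) \<partial>lebesgue))
      + ennreal (2^(n*j)) * (ennreal (2^j) * ennreal (rad ^ (n+1) * \<omega>))"
    by (simp add: distrib_left sum_distrib_left)
  also have "\<dots> \<le> (\<Sum>k'\<in>Kset. M) + ennreal (2^(n*j)) * (ennreal (2^j) * ennreal (rad ^ (n+1) * \<omega>))"
    using Mb unfolding n_def by (intro add_mono sum_mono) auto
  also have "(\<Sum>k'\<in>Kset. M) = of_nat ((2*K+1)^n) * M" using cardK by simp
  also have "ennreal (2^(n*j)) * (ennreal (2^j) * ennreal (rad ^ (n+1) * \<omega>)) = ennreal (2^(n*j) * (2^j * (rad ^ (n+1) * \<omega>)))"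
  proof -
    have r0: "0 \<le> rad" unfolding rad_def by simp
    have e1: "ennreal (2^j) * ennreal (rad^(n+1)*\<omega>) = ennreal (2^j * (rad^(n+1)*\<omega>))"
      by (rule ennreal_mult[symmetric]) (use r0 \<omega>0 in auto)
    have e2: "ennreal (2^(n*j)) * ennreal (2^j * (rad^(n+1)*\<omega>)) = ennreal (2^(n*j) * (2^j * (rad^(n+1)*\<omega>)))"
      by (rule ennreal_mult[symmetric]) (use r0 \<omega>0 in auto)
    show ?thesis by (simp only: e1 e2)
  qed
  also have "2^(n*j) * (2^j * (rad ^ (n+1) * \<omega>)) = real ((n+1)*(K+1)) ^ (n+1) * \<omega>"
  proof -
    have "(2::real)^(n*j) * 2^j = (2^j)^(n+1)" by (simp add: power_mult[symmetric] mult.commute power_add)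
    then show ?thesis unfolding rad_def by (simp add: power_divide field_simps)
  qed
  finally show ?thesis unfolding n_def S_def \<omega>_def .
qed

theorem mainTheorem17:
  fixes A :: "((real^'n::finite) \<times> real) set" and \<delta> \<delta>' :: real
  assumes "A \<in> sets lebesgue"
    and "A \<subseteq> upper_half"
    and "Mcar A < \<infinity>"
    and "0 < \<delta>" "\<delta> < 1/10" "0 < \<delta>'" "\<delta>' < 1/10"
    and "\<forall>z\<in>A. emeasure lebesgue (hball z \<delta> \<inter> A) \<ge> ennreal \<delta>' * emeasure lebesgue (hball z \<delta>)"
  shows "\<forall>R. 0 < R \<longrightarrow> Mcar (hnbhd A R) < \<infinity>"
proof (intro allI impI)
  fix R :: real assume R: "0 < R"
  obtain S0 N0 N' where AS: "A = S0 \<union> N0" "N0 \<subseteq> N'" "N' \<in> null_sets lborel" "S0 \<in> sets lborel"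
    using sets_completionE[OF assms(1)] by metis
  define B where "B = S0 \<union> N'"
  have Bb: "B \<in> sets borel" using AS(3,4) by (auto simp: B_def null_sets_def)
  have AB: "A \<subseteq> B" using AS by (auto simp: B_def)
  obtain K :: nat and c :: real where c0: "0 < c" and
    low: "\<forall>p\<in>hnbhd A R. ennreal (c * snd p ^ (CARD('n)+1))
            \<le> emeasure lborel ({w. dist p w < real K * snd p \<and> snd p < real K * snd w} \<inter> B)"
    using step1[OF assms(2) AB Bb assms(4) assms(6) assms(8), of R] by blast
  define M where "M = Mcar A"
  have termA: "\<forall>k'. ennreal (2^(CARD('n)*j)) * (\<integral>\<^sup>+p. indicator (A \<inter> Tset j k') p / ennreal (snd p) \<partial>lebesgue) \<le> M" for j
  proof
    fix k' :: "'n \<Rightarrow> int"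
    have "(\<lambda>jk. ennreal (2 ^ (CARD('n) * fst jk)) *
     (\<integral>\<^sup>+ p. indicator (A \<inter> (dyadic_cube (fst jk) (snd jk) \<times> {0<..<1 / 2 ^ fst jk})) p
        / ennreal (snd p) \<partial>lebesgue)) (j, k') \<le> Mcar A"
      unfolding Mcar_def by (rule SUP_upper) simp
    then show "ennreal (2^(CARD('n)*j)) * (\<integral>\<^sup>+p. indicator (A \<inter> Tset j k') p / ennreal (snd p) \<partial>lebesgue) \<le> M"
      unfolding M_def Tset_def by simp
  qed
  define N where "N = CARD('n) + 1"
  define C2 where "C2 = (1 + real K) ^ (N+1) * (real K ^ 2) ^ N * measure lborel (ball (0::(real^'n)\<times>real) 1) / c"
  define Bound where "Bound = of_nat ((2*K+1)^CARD('n)) * M + ennreal (real ((CARD('n)+1)*(K+1)) ^ (CARD('n)+1) * measure lborel (ball (0::(real^'n)\<times>real) 1))"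
  have "Mcar (hnbhd A R) \<le> ennreal C2 * Bound"
    unfolding Mcar_def
  proof (rule SUP_least)
    fix jk :: "nat \<times> ('n \<Rightarrow> int)"
    obtain j k where jk: "jk = (j, k)" by (cases jk)
    have "ennreal (2 ^ (CARD('n) * j)) * (\<integral>\<^sup>+ p. indicator (hnbhd A R \<inter> Tset j k) p / ennreal (snd p) \<partial>lebesgue)
        \<le> ennreal (2 ^ (CARD('n) * j)) * (ennreal C2 * (\<integral>\<^sup>+w. indicator (B \<inter> Sset j k K) w * ennreal (1 / snd w) \<partial>lborel))"
      using step2[OF Bb c0 low, of j k] unfolding C2_def N_def by (intro mult_left_mono) auto
    also have "\<dots> = ennreal C2 * (ennreal (2 ^ (CARD('n) * j)) * (\<integral>\<^sup>+w. indicator (B \<inter> Sset j k K) w * ennreal (1 / snd w) \<partial>lborel))"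
      by (simp add: mult_ac)
    also have "\<dots> \<le> ennreal C2 * Bound"
      unfolding Bound_def B_def
      by (intro mult_left_mono step3[OF assms(1) AS(1,2,3)] termA) simp
    finally show "ennreal (2 ^ (CARD('n) * fst jk)) *
       (\<integral>\<^sup>+ p. indicator (hnbhd A R \<inter> (dyadic_cube (fst jk) (snd jk) \<times> {0<..<1 / 2 ^ fst jk})) p
          / ennreal (snd p) \<partial>lebesgue) \<le> ennreal C2 * Bound"
      unfolding jk Tset_def by simp
  qed
  also have "\<dots> < \<infinity>"
  proof -
    have o: "(of_nat ((2*K+1)^CARD('n)) :: ennreal) < top" by (rule of_nat_less_top)
    show ?thesis
      using assms(3) o unfolding Bound_def M_def
      by (simp add: ennreal_mult_less_top)
  qed
  finally show "Mcar (hnbhd A R) < \<infinity>" .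
qed

end
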